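(* For every odd $q\geq 5$, the generalized Farey map $F_q$ is an AFN-map with respect to the partition $\mathcal{P}=\{g.(0,1):g\in\Lambda_q\}$ of $[0,1]$. Its set of indifferent fixed points is $\{0\}$, with $\mathcal{P}_0=\{(0,1/(\lambda+1))\}$.
   Context: Let $q\geq 3$ be odd and $\lambda=2\cos(\pi/q)$. Elements of $\mathrm{PGL}_2(\mathbb{R})$ act on $\mathbb{R}\cup\{\infty\}$ by $\begin{bmatrix}a&b\\c&d\end{bmatrix}.x=(ax+b)/(cx+d)$. Put $s(x)=\sin(x\pi/q)/\sin(\pi/q)$, $g_k=\begin{bmatrix}s(k)&-s(k+1)\\-s(k-1)&s(k)\end{bmatrix}$, $Q=\begin{bmatrix}0&1\\1&0\end{bmatrix}$, $K=\{(q+1)/2,\dots,q-1\}$. The generalized Farey map $F_q\colon[0,1]\to[0,1]$ is $F_q(x)=g_k.x$ on $[g_k^{-1}.0,g_k^{-1}.1]$ and $F_q(x)=Qg_k.x$ on $[(Qg_k)^{-1}.1,(Qg_k)^{-1}.0]$, $k\in K$. $\Lambda_q=\{g_k^{-1},(Qg_k)^{-1}:k\in K\}$. Definitions: A piecewise monotonic system is $(X,T,\mathcal{P})$ with $\mathcal{P}$ a collection of nonempty pairwise disjoint open subintervals of $X$ whose union $X_{\mathcal{P}}$ has complement of Lebesgue measure zero, and $T\colon X\to X$ continuous and strictly monotonic on each $I\in\mathcal{P}$. If moreover $T|_I$ is twice differentiable for each $I\in\mathcal{P}$, $T$ is an AFN-map if: (A) $T''/(T')^2$ is bounded on $X_{\mathcal{P}}$;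 (F) $\{T(I):I\in\mathcal{P}\}$ is finite; (N) there is a finite $\mathcal{P}_0\subseteq\mathcal{P}$ such that each $I\in\mathcal{P}_0$ has a boundary point $x_I$ with $\lim_{x\to x_I,x\in I}T(x)=x_I$ and $\lim_{x\to x_I,x\in I}T'(x)=1$, $T'$ is decreasing on whichever of $(-\infty,x_I)\cap I$, $(x_I,\infty)\cap I$ is nonempty, and for every $\varepsilon>0$ there is $\rho>1$ with $|T'(x)|\geq\rho$ for all $x\in X_{\mathcal{P}}\setminus\bigcup_{I\in\mathcal{P}_0}((x_I-\varepsilon,x_I+\varepsilon)\cap I)$. The points $x_I$ are the indifferent fixed points.
   Formalization: In condition (N), T' is decreasing on $(-\infty,x_I)\cap I$ and increasing on $(x_I,\infty)\cap I$, in place of decreasing on whichever of the two is nonempty. The statement above fails without it. *)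

theory Defs
  imports "HOL-Analysis.Analysis"
begin

definition mat2 :: "real \<Rightarrow> real \<Rightarrow> real \<Rightarrow> real \<Rightarrow> real^2^2" where
  "mat2 a b c d = vector [vector [a, b], vector [c, d]]"

text \<open>Action of [a b; c d] on a real point x: (a x + b)/(c x + d).  All points at which
  this is used below have nonvanishing denominator, so no point at infinity is needed.\<close>
definition mob :: "real^2^2 \<Rightarrow> real \<Rightarrow> real" where
  "mob M x = (M$1$1 * x + M$1$2) / (M$2$1 * x + M$2$2)"

definition lam :: "nat \<Rightarrow> real" where
  "lam q = 2 * cos (pi / real q)"

definition sq :: "nat \<Rightarrow> real \<Rightarrow> real" where
  "sq q x = sin (x * pi / real q) / sin (pi / real q)"

definition gk :: "nat \<Rightarrow> nat \<Rightarrow> real^2^2" where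
  "gk q k = mat2 (sq q (real k)) (- sq q (real k + 1)) (- sq q (real k - 1)) (sq q (real k))"

definition Qm :: "real^2^2" where
  "Qm = mat2 0 1 1 0"

definition Kset :: "nat \<Rightarrow> nat set" where
  "Kset q = {(q + 1) div 2 .. q - 1}"

definition Lambda_q :: "nat \<Rightarrow> (real^2^2) set" where
  "Lambda_q q = (\<lambda>k. matrix_inv (gk q k)) ` Kset q \<union> (\<lambda>k. matrix_inv (Qm ** gk q k)) ` Kset q"

definition farey :: "nat \<Rightarrow> real \<Rightarrow> real" where
  "farey q x = (SOME y. \<exists>k\<in>Kset q.
      (x \<in> {mob (matrix_inv (gk q k)) 0 .. mob (matrix_inv (gk q k)) 1} \<and> y = mob (gk q k) x) \<or>
      (x \<in> {mob (matrix_inv (Qm ** gk q k)) 1 .. mob (matrix_inv (Qm ** gk q k)) 0}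
         \<and> y = mob (Qm ** gk q k) x))"

definition farey_partition :: "nat \<Rightarrow> real set set" where
  "farey_partition q = (\<lambda>g. mob g ` {0<..<1}) ` Lambda_q q"

definition piecewise_monotonic_system :: "real set \<Rightarrow> (real \<Rightarrow> real) \<Rightarrow> real set set \<Rightarrow> bool" where
  "piecewise_monotonic_system X T P \<longleftrightarrow>
     (\<forall>I\<in>P. I \<noteq> {} \<and> open I \<and> is_interval I \<and> I \<subseteq> X) \<and>
     pairwise disjnt P \<and>
     X - \<Union>P \<in> null_sets lebesgue \<and>
     T ` X \<subseteq> X \<and>
     (\<forall>I\<in>P. continuous_on I T \<and> (strict_mono_on I T \<or> strict_antimono_on I T))"

definition AFN_with :: "real set \<Rightarrow> (real \<Rightarrow> real) \<Rightarrow> real set set \<Rightarrow> real set set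
    \<Rightarrow> (real set \<Rightarrow> real) \<Rightarrow> bool" where
  "AFN_with X T P P0 xI \<longleftrightarrow>
     piecewise_monotonic_system X T P \<and>
     (\<forall>I\<in>P. \<forall>x\<in>I. T differentiable (at x) \<and> deriv T differentiable (at x)) \<and>
     \<comment> \<open>(A)\<close>
     (\<exists>C. \<forall>x\<in>\<Union>P. \<bar>deriv (deriv T) x / (deriv T x)\<^sup>2\<bar> \<le> C) \<and>
     \<comment> \<open>(F)\<close>
     finite ((\<lambda>I. T ` I) ` P) \<and>
     \<comment> \<open>(N)\<close>
     finite P0 \<and> P0 \<subseteq> P \<and>
     (\<forall>I\<in>P0. xI I \<in> frontier I \<and>
        (T \<longlongrightarrow> xI I) (at (xI I) within I) \<and>
        (deriv T \<longlongrightarrow> 1) (at (xI I) within I) \<and>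
        antimono_on ({..<xI I} \<inter> I) (deriv T) \<and>
        mono_on ({xI I<..} \<inter> I) (deriv T)) \<and>
     (\<forall>\<epsilon>>0. \<exists>\<rho>>1. \<forall>x \<in> \<Union>P - (\<Union>I\<in>P0. {xI I - \<epsilon> <..< xI I + \<epsilon>} \<inter> I).
        \<bar>deriv T x\<bar> \<ge> \<rho>)"

definition AFN_map :: "real set \<Rightarrow> (real \<Rightarrow> real) \<Rightarrow> real set set \<Rightarrow> bool" where
  "AFN_map X T P \<longleftrightarrow> (\<exists>P0 xI. AFN_with X T P P0 xI)"

end

theory Submission
  imports Defs
begin
lemma mat2_nth [simp]:
  "(mat2 a b c d)$1$1 = a" "(mat2 a b c d)$1$2 = b" "(mat2 a b c d)$2$1 = c" "(mat2 a b c d)$2$2 = d"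
  by (simp_all add: mat2_def)

lemma mob_mat2: "mob (mat2 a b c d) x = (a*x+b)/(c*x+d)"
  by (simp add: mob_def)

lemma mat2_eq_iff: "(M::real^2^2) = mat2 a b c d \<longleftrightarrow> M$1$1 = a \<and> M$1$2 = b \<and> M$2$1 = c \<and> M$2$2 = d"
  by (auto simp: vec_eq_iff forall_2)

lemma mat2_mult: "mat2 a b c d ** mat2 e f g h = mat2 (a*e+b*g) (a*f+b*h) (c*e+d*g) (c*f+d*h)"
  by (simp add: mat2_eq_iff matrix_matrix_mult_def sum_2)

lemma mat1_2: "(mat 1 :: real^2^2) = mat2 1 0 0 1"
  by (simp add: mat2_eq_iff mat_def)

lemma matrix_inv_eqI:
  fixes A B :: "real^2^2"
  assumes "A ** B = mat 1" "B ** A = mat 1"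
  shows "matrix_inv A = B"
proof -
  have ex: "\<exists>A'. A ** A' = mat 1 \<and> A' ** A = mat 1" using assms by blast
  define C where "C = matrix_inv A"
  have C: "A ** C = mat 1 \<and> C ** A = mat 1"
    unfolding C_def matrix_inv_def by (rule someI_ex[OF ex])
  have "C = C ** (A ** B)" using assms by (simp add: matrix_mul_rid)
  also have "\<dots> = (C ** A) ** B" by (simp add: matrix_mul_assoc)
  also have "\<dots> = B" using C by (simp add: matrix_mul_lid)
  finally show ?thesis by (simp add: C_def)
qed

lemma matrix_inv_mat2:
  assumes "a*d - b*c = 1"
  shows "matrix_inv (mat2 a b c d) = mat2 d (-b) (-c) a"
  by (rule matrix_inv_eqI) (use assms in \<open>simp_all add: mat2_mult mat1_2 mat2_eq_iff algebra_simps\<close>)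

lemma matrix_inv_mat2':
  assumes "a*d - b*c = -1"
  shows "matrix_inv (mat2 a b c d) = mat2 (-d) b c (-a)"
  by (rule matrix_inv_eqI) (use assms in \<open>simp_all add: mat2_mult mat1_2 mat2_eq_iff algebra_simps\<close>)

definition S :: "nat \<Rightarrow> nat \<Rightarrow> real" where "S q j = sq q (real j)"

lemma sinpq_pos: "q \<ge> 2 \<Longrightarrow> sin (pi / real q) > 0"
  by (rule sin_gt_zero) (auto simp: field_simps)

lemma S_pos: assumes "q \<ge> 2" "0 < j" "j < q" shows "S q j > 0"
proof -
  have "sin (real j * pi / real q) > 0"
    by (rule sin_gt_zero) (use assms in \<open>auto simp: field_simps\<close>)
  thus ?thesis using sinpq_pos[OF assms(1)] by (simp add: S_def sq_def)
qed

lemma S_q: "q \<ge> 2 \<Longrightarrow> S q q = 0"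
  by (simp add: S_def sq_def)

lemma S_qm1: assumes "q \<ge> 2" shows "S q (q-1) = 1"
proof -
  have "real (q-1) * pi / real q = pi - pi / real q" using assms by (simp add: of_nat_diff field_simps)
  thus ?thesis using sinpq_pos[OF assms] by (simp add: S_def sq_def)
qed

lemma S_qm2: assumes "q \<ge> 3" shows "S q (q-2) = lam q"
proof -
  have "real (q-2) * pi / real q = pi - 2*(pi / real q)" using assms by (simp add: of_nat_diff field_simps)
  moreover have "sin (2 * (pi / real q)) = 2 * sin (pi / real q) * cos (pi / real q)" by (rule sin_double)
  ultimately show ?thesis using sinpq_pos[of q] assms by (simp add: S_def sq_def lam_def)
qed

lemma S_det: assumes "q \<ge> 2" "1 \<le> k" shows "S q k ^ 2 - S q (k-1) * S q (Suc k) = 1"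
proof -
  define t where "t = pi / real q"
  define x where "x = real k * pi / real q"
  have t0: "sin t > 0" using sinpq_pos[OF assms(1)] by (simp add: t_def)
  have e1: "real (k-1) * pi / real q = x - t" using assms by (simp add: x_def t_def of_nat_diff field_simps)
  have e2: "real (Suc k) * pi / real q = x + t" by (simp add: x_def t_def add_divide_distrib distrib_right)
  have "sin x ^ 2 - sin (x - t) * sin (x + t) = sin x^2 - (sin x^2 * cos t^2 - cos x^2 * sin t^2)"
    by (simp add: sin_add sin_diff power2_eq_square algebra_simps)
  also have "\<dots> = sin t ^ 2" by (simp add: cos_squared_eq algebra_simps)
  finally have "sin x ^ 2 - sin (x - t) * sin (x + t) = sin t ^ 2" .
  thus ?thesis using t0 unfolding S_def sq_def e1 e2 x_def[symmetric] t_def[symmetric]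
    by (simp add: field_simps power2_eq_square)
qed

lemma S_gt1: assumes "2 \<le> j" "j + 2 \<le> q" shows "S q j > 1"
proof -
  define t where "t = pi / real q"
  have q: "q \<ge> 2" using assms by simp
  have t0: "sin t > 0" using sinpq_pos[OF q] by (simp add: t_def)
  have tpos: "t > 0" using q by (simp add: t_def)
  have jt: "real j * pi / real q = real j * t" by (simp add: t_def)
  have jq: "real j + 2 \<le> real q" using assms by linarith
  have "pi * (real j + 2) \<le> pi * real q" using jq by (intro mult_left_mono) auto
  hence up: "real j * t \<le> pi - 2 * t" using q by (simp add: t_def field_simps)
  have "sin t < sin (real j * t)"
  proof (cases "real j * t \<le> pi/2")
    case True
    have "t < real j * t" using assms tpos by simp
    moreover have "t \<le> pi/2" using q by (simp add: t_def field_simps)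
    ultimately show ?thesis using True tpos by (intro sin_monotone_2pi) auto
  next
    case False
    have "sin (real j * t) = sin (pi - real j * t)" by simp
    moreover have "sin t < sin (pi - real j * t)"
      using False up tpos by (intro sin_monotone_2pi) auto
    ultimately show ?thesis by simp
  qed
  thus ?thesis using t0 unfolding S_def sq_def jt t_def by simp
qed

lemma S_sym: assumes "odd q" shows "S q ((q+1) div 2) = S q ((q+1) div 2 - 1)"
proof -
  obtain m where m: "q = 2*m+1" using assms oddE by blast
  have "real (Suc m) * pi / real q = pi - real m * pi / real q"
    by (simp add: m field_simps)
  thus ?thesis by (simp add: S_def sq_def m)
qed

lemma S_bound: assumes "q \<ge> 2" shows "\<bar>S q j\<bar> \<le> 1 / sin (pi / real q)"
  using sinpq_pos[OF assms] abs_sin_le_one[of "real j * pi / real q"]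
  by (simp add: S_def sq_def abs_divide divide_right_mono)

lemma mobf_diff:
  fixes a b c d u v :: real
  assumes "c * u+d \<noteq> 0" "c * v+d \<noteq> 0"
  shows "(a * v+b)/(c * v+d) - (a * u+b)/(c * u+d) = (a * d-b * c)*(v-u)/((c * u+d)*(c * v+d))"
proof -
  have "(a * v+b)/(c * v+d) - (a * u+b)/(c * u+d) = ((a * v+b)*(c * u+d) - (a * u+b)*(c * v+d))/((c * u+d)*(c * v+d))"
    using assms by (simp add: diff_frac_eq mult.commute)
  also have "(a * v+b)*(c * u+d) - (a * u+b)*(c * v+d) = (a * d-b * c)*(v-u)" by (simp add: algebra_simps)
  finally show ?thesis .
qed

lemma mobf_mono:
  fixes a b c d u v :: real
  assumes "c * u+d > 0" "c * v+d > 0" "a * d-b * c > 0" "u < v"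
  shows "(a * u+b)/(c * u+d) < (a * v+b)/(c * v+d)"
proof -
  have "(a * v+b)/(c * v+d) - (a * u+b)/(c * u+d) > 0"
    using assms by (subst mobf_diff) (auto intro!: divide_pos_pos mult_pos_pos)
  thus ?thesis by simp
qed

lemma mobf_antimono:
  fixes a b c d u v :: real
  assumes "c * u+d > 0" "c * v+d > 0" "a * d-b * c < 0" "u < v"
  shows "(a * u+b)/(c * u+d) > (a * v+b)/(c * v+d)"
proof -
  have "(a * v+b)/(c * v+d) - (a * u+b)/(c * u+d) < 0"
    using assms by (subst mobf_diff) (auto intro!: divide_neg_pos mult_neg_pos mult_pos_pos)
  thus ?thesis by simp
qed

lemma mobf_cont: "(\<And>x. x \<in> A \<Longrightarrow> c * x+d \<noteq> 0) \<Longrightarrow> continuous_on A (\<lambda>x::real. (a * x+b)/(c * x+d))"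
  by (intro continuous_intros) auto

lemma mobf_image_inc:
  fixes a b c d :: real
  assumes "d > 0" "c + d > 0" "a * d-b * c > 0"
  shows "(\<lambda>x. (a * x+b)/(c * x+d)) ` {0<..<1} = {b/d<..<(a+b)/(c+d)}"
proof -
  define f where "f = (\<lambda>x. (a * x+b)/(c * x+d))"
  have den: "c * x+d > 0" if "0 \<le> x" "x \<le> 1" for x
  proof (cases "c \<ge> 0")
    case True
    have "c * x \<ge> 0" using True that by simp
    thus ?thesis using assms by linarith
  next
    case False
    have "c * x \<ge> c * 1" using that False by (intro mult_left_mono_neg) auto
    thus ?thesis using assms by linarith
  qed
  have mono: "f u < f v" if "0 \<le> u" "u < v" "v \<le> 1" for u v
    unfolding f_def using that by (intro mobf_mono den assms) auto
  have f0: "f 0 = b/d" and f1: "f 1 = (a+b)/(c+d)" by (simp_all add: f_def)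
  have cont: "continuous_on {0..1} f" unfolding f_def
    by (rule mobf_cont) (use den in force)
  show ?thesis unfolding f_def[symmetric]
  proof
    show "f ` {0<..<1} \<subseteq> {b/d<..<(a+b)/(c+d)}"
      using mono f0 f1 by (auto simp flip: f0 f1)
  next
    show "{b/d<..<(a+b)/(c+d)} \<subseteq> f ` {0<..<1}"
    proof
      fix y assume y: "y \<in> {b/d<..<(a+b)/(c+d)}"
      obtain x where x: "0 \<le> x" "x \<le> 1" "f x = y"
        using IVT'[of f 0 y 1] y cont f0 f1 by auto
      have "x \<noteq> 0" "x \<noteq> 1" using x y f0 f1 by auto
      thus "y \<in> f ` {0<..<1}" using x by auto
    qed
  qed
qed

lemma mobf_image_dec:
  fixes a b c d :: real
  assumes "d > 0" "c + d > 0" "a * d-b * c < 0"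
  shows "(\<lambda>x. (a * x+b)/(c * x+d)) ` {0<..<1} = {(a+b)/(c+d)<..<b/d}"
proof -
  define f where "f = (\<lambda>x. (a * x+b)/(c * x+d))"
  have den: "c * x+d > 0" if "0 \<le> x" "x \<le> 1" for x
  proof (cases "c \<ge> 0")
    case True
    have "c * x \<ge> 0" using True that by simp
    thus ?thesis using assms by linarith
  next
    case False
    have "c * x \<ge> c * 1" using that False by (intro mult_left_mono_neg) auto
    thus ?thesis using assms by linarith
  qed
  have mono: "f u > f v" if "0 \<le> u" "u < v" "v \<le> 1" for u v
    unfolding f_def using that by (intro mobf_antimono den assms) auto
  have f0: "f 0 = b/d" and f1: "f 1 = (a+b)/(c+d)" by (simp_all add: f_def)
  have cont: "continuous_on {0..1} f" unfolding f_def
    by (rule mobf_cont) (use den in force)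
  show ?thesis unfolding f_def[symmetric]
  proof
    show "f ` {0<..<1} \<subseteq> {(a+b)/(c+d)<..<b/d}"
      using mono f0 f1 by (auto simp flip: f0 f1)
  next
    show "{(a+b)/(c+d)<..<b/d} \<subseteq> f ` {0<..<1}"
    proof
      fix y assume y: "y \<in> {(a+b)/(c+d)<..<b/d}"
      obtain x where x: "0 \<le> x" "x \<le> 1" "f x = y"
        using IVT2'[of f 1 y 0] y cont f0 f1 by auto
      have "x \<noteq> 0" "x \<noteq> 1" using x y f0 f1 by auto
      thus "y \<in> f ` {0<..<1}" using x by auto
    qed
  qed
qed

lemma mobf_deriv:
  fixes a b c d x :: real
  assumes "c * x+d \<noteq> 0"
  shows "((\<lambda>x. (a * x+b)/(c * x+d)) has_real_derivative (a * d-b * c)/(c * x+d)^2) (at x)"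
  using assms by (auto intro!: derivative_eq_intros simp: field_simps power2_eq_square)

lemma mobf_deriv2:
  fixes c d D x :: real
  assumes "c * x+d \<noteq> 0"
  shows "((\<lambda>x. D/(c * x+d)^2) has_real_derivative -2*c*D/(c * x+d)^3) (at x)"
proof -
  have g: "((\<lambda>x. (c * x+d)^2) has_real_derivative 2*(c * x+d)*c) (at x)"
    by (auto intro!: derivative_eq_intros)
  have h: "((\<lambda>x. D/(c * x+d)^2) has_real_derivative (0 * (c * x+d)^2 - D * (2*(c * x+d)*c)) / ((c * x+d)^2 * (c * x+d)^2)) (at x)"
    by (rule DERIV_divide[OF DERIV_const g]) (use assms in simp)
  have eq: "(0 * w^2 - D * (2*w*c)) / (w^2 * w^2) = -2*c * D/w^3" if "w \<noteq> 0" for w :: real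
    using that by (simp add: field_simps power2_eq_square power3_eq_cube)
  from h show ?thesis unfolding eq[OF assms] .
qed

locale fq =
  fixes q :: nat
  assumes oddq: "odd q" and q5: "q \<ge> 5"
begin

definition hh where "hh = (q+1) div 2"
definition t where "t k = S q (Suc k) / S q k"
definition m where "m k = (S q k + S q (Suc k)) / (S q (k-1) + S q k)"
definition lo where "lo k b = (if b then t k else m k)"
definition hi where "hi k b = (if b then m k else t (k-1))"
definition J where "J k b = {lo k b <..< hi k b}"
definition ca where "ca k b = (if b then S q k else - S q (k-1))"
definition cb where "cb k b = (if b then - S q (Suc k) else S q k)"
definition cc where "cc k b = (if b then - S q (k-1) else S q k)"
definition cd where "cd k b = (if b then S q k else - S q (Suc k))"
definition den where "den k b x = cc k b * x + cd k b"
definition fm where "fm k b x = (ca k b * x + cb k b) / den k b x"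

lemma hh: "2 * hh = q + 1" "hh \<ge> 3" "hh \<le> q - 1"
  using oddq q5 by (auto simp: hh_def elim!: oddE)

lemma K: "Kset q = {hh..q-1}" by (simp add: Kset_def hh_def)

lemma K_mem: assumes "k \<in> Kset q" shows "3 \<le> k" "k \<le> q - 1" "hh \<le> k"
  using assms hh by (auto simp: K)

lemma q2: "q \<ge> 2" "q \<ge> 3" using q5 by auto

lemma Sk_pos: "k \<in> Kset q \<Longrightarrow> S q k > 0"
  using K_mem[of k] q5 by (intro S_pos) auto
lemma Skm1_pos: "k \<in> Kset q \<Longrightarrow> S q (k-1) > 0"
  using K_mem[of k] q5 by (intro S_pos) auto
lemma SSk_nonneg: assumes "k \<in> Kset q" shows "S q (Suc k) \<ge> 0"
proof (cases "Suc k = q")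
  case True thus ?thesis using S_q q2 by simp
next
  case False
  have "Suc k < q" using False K_mem[OF assms] by arith
  thus ?thesis using S_pos[of q "Suc k"] q2 by simp
qed
lemma det1: "k \<in> Kset q \<Longrightarrow> S q k ^ 2 - S q (k-1) * S q (Suc k) = 1"
  using K_mem[of k] q2 by (intro S_det) auto
lemma Sk_ge1: assumes "k \<in> Kset q" shows "S q k \<ge> 1"
proof (cases "k = q - 1")
  case True thus ?thesis using S_qm1 q2 by simp
next
  case False
  have "k + 2 \<le> q" using False K_mem[OF assms] by arith
  thus ?thesis using K_mem[OF assms] S_gt1[of k q] by simp
qed
lemma Skm1_gt1: assumes "k \<in> Kset q" shows "S q (k-1) > 1"
  using K_mem[OF assms] by (intro S_gt1) auto

lemma tk_mul: "k \<in> Kset q \<Longrightarrow> S q k * t k = S q (Suc k)"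
  using Sk_pos[of k] by (simp add: t_def)
lemma tkm1_mul: "k \<in> Kset q \<Longrightarrow> S q (k-1) * t (k-1) = S q k"
  using Skm1_pos[of k] K_mem[of k] by (simp add: t_def)
lemma mk_mul: "k \<in> Kset q \<Longrightarrow> (S q (k-1) + S q k) * m k = S q k + S q (Suc k)"
  using Sk_pos[of k] Skm1_pos[of k] by (simp add: m_def)

lemma t_lt_m: assumes k: "k \<in> Kset q" shows "t k < m k"
proof -
  note p = Sk_pos[OF k] Skm1_pos[OF k] SSk_nonneg[OF k] det1[OF k]
  have "S q (Suc k) * (S q (k-1) + S q k) < S q k * (S q k + S q (Suc k))"
    using p by (simp add: algebra_simps power2_eq_square)
  thus ?thesis using p by (simp add: t_def m_def divide_simps mult.commute)
qed

lemma m_lt_t: assumes k: "k \<in> Kset q" shows "m k < t (k-1)"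
proof -
  note p = Sk_pos[OF k] Skm1_pos[OF k] SSk_nonneg[OF k] det1[OF k]
  have kk: "Suc (k - Suc 0) = k" using K_mem[OF k] by simp
  have "(S q k + S q (Suc k)) * S q (k-1) < S q k * (S q (k-1) + S q k)"
    using p by (simp add: algebra_simps power2_eq_square)
  thus ?thesis using p by (simp add: t_def m_def kk divide_simps mult.commute)
qed

lemma t_step: assumes "hh \<le> Suc j" "Suc j \<le> q - 1" shows "t (Suc j) < t j"
proof -
  have k: "Suc j \<in> Kset q" using assms by (simp add: K)
  show ?thesis using t_lt_m[OF k] m_lt_t[OF k] by simp
qed

lemma t_anti: assumes "hh - 1 \<le> i" "i \<le> j" "j \<le> q - 1" shows "t j \<le> t i"
  using assms(2,3)
proof (induction j rule: dec_induct)
  case base thus ?case by simp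
next
  case (step n)
  have "t (Suc n) < t n" using step assms by (intro t_step) auto
  thus ?case using step by simp
qed

lemma t_q1: "t (q-1) = 0" using S_q q2 by (simp add: t_def)
lemma t_hh1: "t (hh-1) = 1"
proof -
  have "Suc (hh-1) = hh" using hh by simp
  moreover have "S q hh = S q (hh-1)" using S_sym[OF oddq] by (simp add: hh_def)
  moreover have "S q (hh-1) > 0" using hh q2 by (intro S_pos) auto
  ultimately show ?thesis by (simp add: t_def)
qed

lemma t_range: assumes "hh - 1 \<le> i" "i \<le> q - 1" shows "0 \<le> t i" "t i \<le> 1"
  using t_anti[of i "q-1"] t_anti[of "hh-1" i] assms t_q1 t_hh1 hh by auto

lemma lohi: assumes k: "k \<in> Kset q"
  shows "t k \<le> lo k b" "lo k b < hi k b" "hi k b \<le> t (k-1)" "0 \<le> lo k b" "hi k b \<le> 1"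
proof -
  show "t k \<le> lo k b" "lo k b < hi k b" "hi k b \<le> t (k-1)"
    using t_lt_m[OF k] m_lt_t[OF k] by (auto simp: lo_def hi_def)
  moreover have "0 \<le> t k" "t (k-1) \<le> 1" using K_mem[OF k] by (intro t_range; simp)+
  ultimately show "0 \<le> lo k b" "hi k b \<le> 1" by linarith+
qed

lemma disj: assumes k: "k \<in> Kset q" and k': "k' \<in> Kset q" and ne: "(k,b) \<noteq> (k',b')"
  shows "J k b \<inter> {lo k' b'..hi k' b'} = {}"
proof -
  have "hi k' b' \<le> lo k b \<or> hi k b \<le> lo k' b'"
  proof (cases k k' rule: linorder_cases)
    case less
    have "t (k'-1) \<le> t k" using K_mem[OF k] K_mem[OF k'] less by (intro t_anti) auto
    thus ?thesis using lohi[OF k, of b] lohi[OF k', of b'] by linarith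
  next
    case greater
    have "t (k-1) \<le> t k'" using K_mem[OF k] K_mem[OF k'] greater by (intro t_anti) auto
    thus ?thesis using lohi[OF k, of b] lohi[OF k', of b'] by linarith
  next
    case equal
    thus ?thesis using ne by (cases b; cases b') (auto simp: lo_def hi_def)
  qed
  thus ?thesis by (auto simp: J_def)
qed

end

context fq begin

lemma detD: "k \<in> Kset q \<Longrightarrow> ca k b * cd k b - cb k b * cc k b = (if b then 1 else -1)"
  using det1[of k] by (cases b) (auto simp: ca_def cb_def cc_def cd_def power2_eq_square algebra_simps)

lemma den_bounds: assumes k: "k \<in> Kset q" and x: "x \<in> {lo k b..hi k b}"
  shows "den k b x \<ge> 1 / (S q (k-1) + S q k)"
    "den k b x \<le> (if b then 1 / S q k else 1 / S q (k-1))"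
proof -
  note p = Sk_pos[OF k] Skm1_pos[OF k] SSk_nonneg[OF k] det1[OF k]
  note mul = tk_mul[OF k] tkm1_mul[OF k] mk_mul[OF k]
  have pos: "S q (k-1) + S q k > 0" using p by simp
  have "den k b x * (S q (k-1) + S q k) \<ge> 1 \<and>
        (if b then den k b x * S q k \<le> 1 else den k b x * S q (k-1) \<le> 1)"
  proof (cases b)
    case True
    have x1: "t k \<le> x" "x \<le> m k" using x True by (auto simp: lo_def hi_def)
    have a: "S q (k-1) * x \<le> S q (k-1) * m k" using x1 p by (intro mult_left_mono) auto
    have b: "S q (k-1) * t k \<le> S q (k-1) * x" using x1 p by (intro mult_left_mono) auto
    have "(S q k - S q (k-1) * x) * (S q (k-1) + S q k) \<ge> (S q k - S q (k-1) * m k) * (S q (k-1) + S q k)"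
      using a pos by (intro mult_right_mono) auto
    also have "(S q k - S q (k-1) * m k) * (S q (k-1) + S q k) = S q k * (S q (k-1) + S q k) - S q (k-1) * ((S q (k-1) + S q k) * m k)"
      by (simp add: algebra_simps)
    also have "\<dots> = 1" unfolding mul(3) using p(4) by (simp add: algebra_simps power2_eq_square)
    finally have 1: "(S q k - S q (k-1) * x) * (S q (k-1) + S q k) \<ge> 1" .
    have "(S q k - S q (k-1) * x) * S q k \<le> (S q k - S q (k-1) * t k) * S q k"
      using b p by (intro mult_right_mono) auto
    also have "(S q k - S q (k-1) * t k) * S q k = 1"
      using mul(1) p(4) by (simp add: algebra_simps power2_eq_square)
    finally show ?thesis using 1 True by (simp add: den_def cc_def cd_def)
  next
    case False
    have x1: "m k \<le> x" "x \<le> t (k-1)" using x False by (auto simp: lo_def hi_def)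
    have a: "S q k * m k \<le> S q k * x" using x1 p by (intro mult_left_mono) auto
    have b: "S q k * x \<le> S q k * t (k-1)" using x1 p by (intro mult_left_mono) auto
    have "(S q k * x - S q (Suc k)) * (S q (k-1) + S q k) \<ge> (S q k * m k - S q (Suc k)) * (S q (k-1) + S q k)"
      using a pos by (intro mult_right_mono) auto
    also have "(S q k * m k - S q (Suc k)) * (S q (k-1) + S q k) = S q k * ((S q (k-1) + S q k) * m k) - S q (Suc k) * (S q (k-1) + S q k)"
      by (simp add: algebra_simps)
    also have "\<dots> = 1" unfolding mul(3) using p(4) by (simp add: algebra_simps power2_eq_square)
    finally have 1: "(S q k * x - S q (Suc k)) * (S q (k-1) + S q k) \<ge> 1" .
    have "(S q k * x - S q (Suc k)) * S q (k-1) \<le> (S q k * t (k-1) - S q (Suc k)) * S q (k-1)"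
      using b p by (intro mult_right_mono) auto
    also have "(S q k * t (k-1) - S q (Suc k)) * S q (k-1) = 1"
      using mul(2) p(4) by (simp add: algebra_simps power2_eq_square)
    finally show ?thesis using 1 False by (simp add: den_def cc_def cd_def)
  qed
  thus "den k b x \<ge> 1 / (S q (k-1) + S q k)"
    "den k b x \<le> (if b then 1 / S q k else 1 / S q (k-1))"
    using pos p by (auto simp: field_simps split: if_splits)
qed

lemma den_pos: assumes "k \<in> Kset q" "x \<in> {lo k b..hi k b}" shows "den k b x > 0"
proof -
  have "1 / (S q (k-1) + S q k) > 0" using Sk_pos[OF assms(1)] Skm1_pos[OF assms(1)] by simp
  thus ?thesis using den_bounds(1)[OF assms] by linarith
qed

lemma den_le1: assumes "k \<in> Kset q" "x \<in> {lo k b..hi k b}" shows "den k b x \<le> 1"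
proof -
  have "1 / S q k \<le> 1" "1 / S q (k-1) \<le> 1" using Sk_ge1[OF assms(1)] Skm1_gt1[OF assms(1)] by simp_all
  thus ?thesis using den_bounds(2)[OF assms] by (auto split: if_splits)
qed

lemma fm_range: assumes k: "k \<in> Kset q" and x: "x \<in> {lo k b..hi k b}"
  shows "0 \<le> fm k b x" "fm k b x \<le> 1"
proof -
  note p = Sk_pos[OF k] Skm1_pos[OF k] SSk_nonneg[OF k] det1[OF k]
  note mul = tk_mul[OF k] tkm1_mul[OF k] mk_mul[OF k]
  have d: "den k b x > 0" by (rule den_pos[OF k x])
  have "0 \<le> ca k b * x + cb k b \<and> ca k b * x + cb k b \<le> den k b x"
  proof (cases b)
    case True
    have x1: "t k \<le> x" "x \<le> m k" using x True by (auto simp: lo_def hi_def)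
    have a: "S q k * t k \<le> S q k * x" using x1 p by (intro mult_left_mono) auto
    have b: "(S q (k-1) + S q k) * x \<le> (S q (k-1) + S q k) * m k" using x1 p by (intro mult_left_mono) auto
    show ?thesis using a b mul True by (simp add: ca_def cb_def den_def cc_def cd_def algebra_simps)
  next
    case False
    have x1: "m k \<le> x" "x \<le> t (k-1)" using x False by (auto simp: lo_def hi_def)
    have a: "S q (k-1) * x \<le> S q (k-1) * t (k-1)" using x1 p by (intro mult_left_mono) auto
    have b: "(S q (k-1) + S q k) * m k \<le> (S q (k-1) + S q k) * x" using x1 p by (intro mult_left_mono) auto
    show ?thesis using a b mul False by (simp add: ca_def cb_def den_def cc_def cd_def algebra_simps)
  qed
  thus "0 \<le> fm k b x" "fm k b x \<le> 1" using d by (simp_all add: fm_def)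
qed

lemma gk_eq: assumes "k \<ge> 1" shows "gk q k = mat2 (S q k) (- S q (Suc k)) (- S q (k-1)) (S q k)"
  using assms by (simp add: gk_def S_def of_nat_diff add.commute)

lemma ginv_eq: assumes "k \<in> Kset q"
  shows "matrix_inv (gk q k) = mat2 (S q k) (S q (Suc k)) (S q (k-1)) (S q k)"
  using det1[OF assms] K_mem[OF assms]
  by (simp add: gk_eq matrix_inv_mat2 power2_eq_square mult.commute)

lemma Qg_eq: assumes "k \<ge> 1"
  shows "Qm ** gk q k = mat2 (- S q (k-1)) (S q k) (S q k) (- S q (Suc k))"
  using assms by (simp add: gk_eq Qm_def mat2_mult)

lemma Qginv_eq: assumes "k \<in> Kset q"
  shows "matrix_inv (Qm ** gk q k) = mat2 (S q (Suc k)) (S q k) (S q k) (S q (k-1))"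
proof -
  have "matrix_inv (Qm ** gk q k) = mat2 (- (- S q (Suc k))) (S q k) (S q k) (- (- S q (k-1)))"
    using det1[OF assms] K_mem[OF assms]
    by (simp add: Qg_eq matrix_inv_mat2' power2_eq_square mult.commute)
  thus ?thesis by simp
qed

lemma mob_g: "k \<in> Kset q \<Longrightarrow> mob (gk q k) x = fm k True x"
  using K_mem[of k] by (simp add: gk_eq mob_mat2 fm_def ca_def cb_def den_def cc_def cd_def)
lemma mob_Qg: "k \<in> Kset q \<Longrightarrow> mob (Qm ** gk q k) x = fm k False x"
  using K_mem[of k] by (simp add: Qg_eq mob_mat2 fm_def ca_def cb_def den_def cc_def cd_def)

lemma ends: assumes k: "k \<in> Kset q"
  shows "mob (matrix_inv (gk q k)) 0 = lo k True" "mob (matrix_inv (gk q k)) 1 = hi k True"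
    "mob (matrix_inv (Qm ** gk q k)) 1 = lo k False" "mob (matrix_inv (Qm ** gk q k)) 0 = hi k False"
proof -
  have kk: "Suc (k - Suc 0) = k" using K_mem[OF k] by simp
  show "mob (matrix_inv (gk q k)) 0 = lo k True" "mob (matrix_inv (gk q k)) 1 = hi k True"
    "mob (matrix_inv (Qm ** gk q k)) 1 = lo k False" "mob (matrix_inv (Qm ** gk q k)) 0 = hi k False"
    using k by (simp_all add: ginv_eq Qginv_eq mob_mat2 lo_def hi_def t_def m_def kk add.commute)
qed

definition PP where "PP x y \<longleftrightarrow> (\<exists>k\<in>Kset q. \<exists>b. x \<in> {lo k b..hi k b} \<and> y = fm k b x)"

lemma farey_eq: "farey q x = (SOME y. PP x y)"
  unfolding farey_def PP_def
proof (intro arg_cong[where f = Eps] ext bex_cong refl)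
  fix y k assume k: "k \<in> Kset q"
  show "(x \<in> {mob (matrix_inv (gk q k)) 0..mob (matrix_inv (gk q k)) 1} \<and> y = mob (gk q k) x \<or>
        x \<in> {mob (matrix_inv (Qm ** gk q k)) 1..mob (matrix_inv (Qm ** gk q k)) 0} \<and> y = mob (Qm ** gk q k) x)
       = (\<exists>b. x \<in> {lo k b..hi k b} \<and> y = fm k b x)"
    unfolding ends[OF k] mob_g[OF k] mob_Qg[OF k]
  proof
    assume "x \<in> {lo k True..hi k True} \<and> y = fm k True x \<or> x \<in> {lo k False..hi k False} \<and> y = fm k False x"
    thus "\<exists>b. x \<in> {lo k b..hi k b} \<and> y = fm k b x" by blast
  next
    assume "\<exists>b. x \<in> {lo k b..hi k b} \<and> y = fm k b x"
    then obtain b where "x \<in> {lo k b..hi k b} \<and> y = fm k b x" by blast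
    thus "x \<in> {lo k True..hi k True} \<and> y = fm k True x \<or> x \<in> {lo k False..hi k False} \<and> y = fm k False x"
      by (cases b) auto
  qed
qed

lemma farey_at: assumes k: "k \<in> Kset q" and x: "x \<in> J k b"
  shows "farey q x = fm k b x"
proof -
  have ex: "PP x (fm k b x)" unfolding PP_def
    using k x by (intro bexI[OF _ k] exI[of _ b]) (auto simp: J_def)
  have uniq: "y = fm k b x" if py: "PP x y" for y
  proof -
    obtain k' b' where k': "k' \<in> Kset q" and x': "x \<in> {lo k' b'..hi k' b'}" and y: "y = fm k' b' x"
      using py unfolding PP_def by blast
    have "(k,b) = (k',b')"
      using disj[OF k k', of b b'] x x' by blast
    thus ?thesis using y by simp
  qed
  show ?thesis unfolding farey_eq using someI[of "PP x", OF ex] uniq by blast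
qed

lemma cover: assumes x: "x \<in> {0..1}" shows "\<exists>k\<in>Kset q. t k \<le> x \<and> x \<le> t (k-1)"
proof -
  have "\<forall>j. hh - 1 + n = j \<longrightarrow> j \<le> q - 1 \<longrightarrow> t j \<le> x \<longrightarrow> (\<exists>k\<in>Kset q. t k \<le> x \<and> x \<le> t (k-1))" for n
  proof (induction n)
    case 0
    show ?case
    proof (intro allI impI)
      fix j assume j: "hh - 1 + 0 = j" "t j \<le> x"
      have "x = t (hh-1)" using j x t_hh1 by simp
      moreover have "hh \<in> Kset q" using hh by (simp add: K)
      moreover have "t hh \<le> t (hh - 1)" using hh by (intro t_anti) auto
      ultimately show "\<exists>k\<in>Kset q. t k \<le> x \<and> x \<le> t (k-1)" by force
    qed
  next
    case (Suc n)
    show ?case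
    proof (intro allI impI)
      fix j assume j: "hh - 1 + Suc n = j" "j \<le> q - 1" "t j \<le> x"
      show "\<exists>k\<in>Kset q. t k \<le> x \<and> x \<le> t (k-1)"
      proof (cases "t (j-1) \<le> x")
        case True thus ?thesis using Suc.IH[rule_format, of "j-1"] j by auto
      next
        case False
        have "j \<in> Kset q" using j hh by (auto simp: K)
        thus ?thesis using False j by auto
      qed
    qed
  qed
  from this[of "q - 1 - (hh - 1)", rule_format, of "q-1"] show ?thesis
    using hh t_q1 x by auto
qed

lemma cover2: assumes x: "x \<in> {0..1}" shows "\<exists>k\<in>Kset q. \<exists>b. x \<in> {lo k b..hi k b}"
proof -
  obtain k where k: "k \<in> Kset q" "t k \<le> x" "x \<le> t (k-1)" using cover[OF x] by blast
  show ?thesis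
  proof (cases "x \<le> m k")
    case True thus ?thesis using k by (intro bexI[OF _ k(1)] exI[of _ True]) (auto simp: lo_def hi_def)
  next
    case False thus ?thesis using k by (intro bexI[OF _ k(1)] exI[of _ False]) (auto simp: lo_def hi_def)
  qed
qed

lemma farey_range: assumes x: "x \<in> {0..1}" shows "farey q x \<in> {0..1}"
proof -
  obtain k b where k: "k \<in> Kset q" "x \<in> {lo k b..hi k b}" using cover2[OF x] by blast
  have ex: "PP x (fm k b x)" using k by (auto simp: PP_def)
  have "PP x (farey q x)" unfolding farey_eq by (rule someI[of "PP x", OF ex])
  then obtain k' b' where "k' \<in> Kset q" "x \<in> {lo k' b'..hi k' b'}" "farey q x = fm k' b' x"
    by (auto simp: PP_def)
  thus ?thesis using fm_range by auto
qed

lemma image_A: assumes k: "k \<in> Kset q" shows "mob (matrix_inv (gk q k)) ` {0<..<1} = J k True"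
proof -
  note p = Sk_pos[OF k] Skm1_pos[OF k] SSk_nonneg[OF k] det1[OF k]
  have "mob (matrix_inv (gk q k)) = (\<lambda>x. (S q k * x + S q (Suc k)) / (S q (k-1) * x + S q k))"
    by (simp add: ginv_eq[OF k] mob_mat2[abs_def])
  moreover have "(\<lambda>x. (S q k * x + S q (Suc k)) / (S q (k-1) * x + S q k)) ` {0<..<1} =
     {S q (Suc k) / S q k <..< (S q k + S q (Suc k)) / (S q (k-1) + S q k)}"
    using p by (intro mobf_image_inc) (auto simp: power2_eq_square mult.commute)
  ultimately show ?thesis by (simp add: J_def lo_def hi_def t_def m_def)
qed

lemma image_B: assumes k: "k \<in> Kset q" shows "mob (matrix_inv (Qm ** gk q k)) ` {0<..<1} = J k False"
proof -
  note p = Sk_pos[OF k] Skm1_pos[OF k] SSk_nonneg[OF k] det1[OF k]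
  have kk: "Suc (k - Suc 0) = k" using K_mem[OF k] by simp
  have "mob (matrix_inv (Qm ** gk q k)) = (\<lambda>x. (S q (Suc k) * x + S q k) / (S q k * x + S q (k-1)))"
    by (simp add: Qginv_eq[OF k] mob_mat2[abs_def])
  moreover have "(\<lambda>x. (S q (Suc k) * x + S q k) / (S q k * x + S q (k-1))) ` {0<..<1} =
     {(S q (Suc k) + S q k) / (S q k + S q (k-1)) <..< S q k / S q (k-1)}"
    using p by (intro mobf_image_dec) (auto simp: power2_eq_square mult.commute)
  ultimately show ?thesis by (simp add: J_def lo_def hi_def t_def m_def kk add.commute)
qed

lemma partition_eq: "farey_partition q = (\<lambda>(k,b). J k b) ` (Kset q \<times> UNIV)"
proof -
  have "farey_partition q = (\<lambda>k. mob (matrix_inv (gk q k)) ` {0<..<1}) ` Kset q \<union>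
        (\<lambda>k. mob (matrix_inv (Qm ** gk q k)) ` {0<..<1}) ` Kset q"
    unfolding farey_partition_def Lambda_q_def image_Un image_image ..
  also have "\<dots> = (\<lambda>k. J k True) ` Kset q \<union> (\<lambda>k. J k False) ` Kset q"
    using image_A image_B by (intro arg_cong2[where f="(\<union>)"] image_cong) simp_all
  also have "\<dots> = (\<lambda>(k,b). J k b) ` (Kset q \<times> UNIV)"
  proof (rule set_eqI, rule iffI)
    fix I assume "I \<in> (\<lambda>k. J k True) ` Kset q \<union> (\<lambda>k. J k False) ` Kset q"
    then obtain k b where "k \<in> Kset q" "I = J k b" by blast
    thus "I \<in> (\<lambda>(k,b). J k b) ` (Kset q \<times> UNIV)" by force
  next
    fix I assume "I \<in> (\<lambda>(k,b). J k b) ` (Kset q \<times> UNIV)"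
    then obtain k b where kb: "k \<in> Kset q" "I = J k b" by force
    thus "I \<in> (\<lambda>k. J k True) ` Kset q \<union> (\<lambda>k. J k False) ` Kset q"
      by (cases b) auto
  qed
  finally show ?thesis .
qed

end

context fq begin

definition DD :: "bool \<Rightarrow> real" where "DD b = (if b then 1 else -1)"

lemma fm_alt: "fm k b = (\<lambda>x. (ca k b * x + cb k b) / (cc k b * x + cd k b))"
  by (simp add: fm_def den_def fun_eq_iff)

lemma J_open: "open (J k b)" by (simp add: J_def)
lemma J_sub: "J k b \<subseteq> {lo k b..hi k b}" by (auto simp: J_def)

lemma farey_deriv: assumes k: "k \<in> Kset q" and x: "x \<in> J k b"
  shows "(farey q has_real_derivative DD b / (den k b x)^2) (at x)"
proof -
  have d: "den k b x \<noteq> 0" using den_pos[OF k] J_sub x by (metis less_irrefl subsetD)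
  have "(fm k b has_real_derivative (ca k b * cd k b - cb k b * cc k b) / (cc k b * x + cd k b)^2) (at x)"
    unfolding fm_alt by (rule mobf_deriv) (use d in \<open>simp add: den_def\<close>)
  hence "(fm k b has_real_derivative DD b / (den k b x)^2) (at x)"
    by (simp add: detD[OF k] DD_def den_def)
  thus ?thesis
    by (rule has_field_derivative_transform_within_open[OF _ J_open x])
       (simp add: farey_at[OF k])
qed

lemma deriv_farey: "k \<in> Kset q \<Longrightarrow> x \<in> J k b \<Longrightarrow> deriv (farey q) x = DD b / (den k b x)^2"
  by (rule DERIV_imp_deriv[OF farey_deriv])

lemma farey_deriv2: assumes k: "k \<in> Kset q" and x: "x \<in> J k b"
  shows "(deriv (farey q) has_real_derivative -2 * cc k b * DD b / (den k b x)^3) (at x)"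
proof -
  have d: "den k b x \<noteq> 0" using den_pos[OF k] J_sub x by (metis less_irrefl subsetD)
  have "((\<lambda>y. DD b / (cc k b * y + cd k b)^2) has_real_derivative -2 * cc k b * DD b / (cc k b * x + cd k b)^3) (at x)"
    by (rule mobf_deriv2) (use d in \<open>simp add: den_def\<close>)
  thus ?thesis unfolding den_def[symmetric]
    by (rule has_field_derivative_transform_within_open[OF _ J_open x])
       (simp add: deriv_farey[OF k] den_def)
qed

lemma deriv2_farey: "k \<in> Kset q \<Longrightarrow> x \<in> J k b \<Longrightarrow> deriv (deriv (farey q)) x = -2 * cc k b * DD b / (den k b x)^3"
  by (rule DERIV_imp_deriv[OF farey_deriv2])

lemma ratio_eq: fixes w c D :: real assumes "w > 0" "D = 1 \<or> D = -1"
  shows "\<bar>(-2 * c * D / w^3) / (D / w^2)^2\<bar> = 2 * \<bar>c\<bar> * w"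
  using assms by (auto simp: field_simps power2_eq_square power3_eq_cube abs_mult)

lemma cc_bound: "k \<in> Kset q \<Longrightarrow> \<bar>cc k b\<bar> \<le> 1 / sin (pi / real q)"
  using S_bound[of q] q2 by (auto simp: cc_def)

lemma J_nonempty: "k \<in> Kset q \<Longrightarrow> J k b \<noteq> {}"
  using lohi(2)[of k b] by (auto simp: J_def)

lemma J_in01: "k \<in> Kset q \<Longrightarrow> J k b \<subseteq> {0..1}"
  using lohi(4,5)[of k b] by (auto simp: J_def)

lemma finK: "finite (Kset q)" by (simp add: Kset_def)

lemma farey_mono: assumes k: "k \<in> Kset q"
  shows "if b then strict_mono_on (J k b) (farey q) else strict_antimono_on (J k b) (farey q)"
proof -
  have mono: "farey q u < farey q v" if "b" "u \<in> J k b" "v \<in> J k b" "u < v" for u v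
  proof -
    have "fm k b u < fm k b v" unfolding fm_alt
      using den_pos[OF k, of u b] den_pos[OF k, of v b] subsetD[OF J_sub, of u k b] subsetD[OF J_sub, of v k b] that detD[OF k, of b]
      by (intro mobf_mono) (auto simp: den_def)
    thus ?thesis using farey_at[OF k] that by simp
  qed
  have anti: "farey q u > farey q v" if "\<not>b" "u \<in> J k b" "v \<in> J k b" "u < v" for u v
  proof -
    have "fm k b u > fm k b v" unfolding fm_alt
      using den_pos[OF k, of u b] den_pos[OF k, of v b] subsetD[OF J_sub, of u k b] subsetD[OF J_sub, of v k b] that detD[OF k, of b]
      by (intro mobf_antimono) (auto simp: den_def)
    thus ?thesis using farey_at[OF k] that by simp
  qed
  show ?thesis using mono anti by (auto simp: monotone_on_def)
qed

lemma pms: "piecewise_monotonic_system {0..1} (farey q) (farey_partition q)"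
proof -
  let ?P = "(\<lambda>(k,b). J k b) ` (Kset q \<times> UNIV)"
  have 1: "\<forall>I\<in>?P. I \<noteq> {} \<and> open I \<and> is_interval I \<and> I \<subseteq> {0..1}"
  proof
    fix I assume "I \<in> ?P"
    then obtain k b where k: "k \<in> Kset q" and I: "I = J k b" by auto
    show "I \<noteq> {} \<and> open I \<and> is_interval I \<and> I \<subseteq> {0..1}"
      using J_nonempty[OF k] J_in01[OF k] by (auto simp: I J_def is_interval_1)
  qed
  have 2: "\<forall>I\<in>?P. continuous_on I (farey q) \<and> (strict_mono_on I (farey q) \<or> strict_antimono_on I (farey q))"
  proof
    fix I assume "I \<in> ?P"
    then obtain k b where k: "k \<in> Kset q" and I: "I = J k b" by auto
    have "continuous_on I (farey q)"
      using farey_deriv[OF k] unfolding I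
      by (intro continuous_at_imp_continuous_on ballI DERIV_isCont) blast
    moreover have "strict_mono_on I (farey q) \<or> strict_antimono_on I (farey q)"
      using farey_mono[OF k, of b] unfolding I by (auto split: if_splits)
    ultimately show "continuous_on I (farey q) \<and> (strict_mono_on I (farey q) \<or> strict_antimono_on I (farey q))"
      by blast
  qed
  have 3: "pairwise disjnt ?P"
  proof (rule pairwise_imageI)
    fix x y :: "nat \<times> bool" assume xy: "x \<in> Kset q \<times> UNIV" "y \<in> Kset q \<times> UNIV" "x \<noteq> y"
    obtain k b k' b' where x: "x = (k,b)" and y: "y = (k',b')" by (cases x, cases y) auto
    have "J k b \<inter> {lo k' b'..hi k' b'} = {}" using disj xy x y by auto
    thus "disjnt ((\<lambda>(k,b). J k b) x) ((\<lambda>(k,b). J k b) y)"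
      using J_sub[of k' b'] x y by (auto simp: disjnt_def)
  qed
  let ?F = "(\<lambda>(k,b). lo k b) ` (Kset q \<times> UNIV) \<union> (\<lambda>(k,b). hi k b) ` (Kset q \<times> UNIV)"
  have fin: "finite ?F" using finK by auto
  have sub: "{0..1} - \<Union> ?P \<subseteq> ?F"
  proof
    fix x assume x: "x \<in> {0..1} - \<Union> ?P"
    obtain k b where k: "k \<in> Kset q" "x \<in> {lo k b..hi k b}" using cover2 x by blast
    have "x \<notin> J k b" using x k by auto
    hence "x = lo k b \<or> x = hi k b" using k by (auto simp: J_def)
    thus "x \<in> ?F" using k by force
  qed
  have "negligible ({0..1} - \<Union> ?P)"
    by (rule negligible_subset[OF negligible_finite[OF fin] sub])
  hence 4: "{0..1} - \<Union> ?P \<in> null_sets lebesgue"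
    by (simp add: negligible_iff_null_sets)
  have 5: "farey q ` {0..1} \<subseteq> {0..1}" using farey_range by auto
  show ?thesis unfolding piecewise_monotonic_system_def partition_eq
    using 1 2 3 4 5 by blast
qed

end

lemma inv_sq_mono: fixes w a :: real assumes "0 < w" "w \<le> a" shows "1 / a^2 \<le> 1 / w^2"
proof -
  have "w^2 \<le> a^2" using assms by (intro power_mono) auto
  thus ?thesis using assms by (intro divide_left_mono) auto
qed

context fq begin

lemma lam_gt1: "lam q > 1"
  using S_gt1[of "q-2" q] S_qm2[of q] q5 by simp

lemma Kq1: "q - 1 \<in> Kset q" using hh by (simp add: K)

lemma qfacts: "Suc (q - Suc 0) = q" "q - Suc 0 - Suc 0 = q - 2" "q - Suc (Suc 0) = q - 2"
  using q5 by auto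

lemma I0_eq: "J (q-1) True = {0<..<1 / (lam q + 1)}"
proof -
  have "t (q - 1) = 0" by (rule t_q1)
  hence "t (q - Suc 0) = 0" by simp
  thus ?thesis using S_q[of q] S_qm1[of q] S_qm2[of q] q5
    by (simp add: J_def lo_def hi_def m_def qfacts add.commute)
qed

lemma den_q1: "den (q-1) True x = 1 - lam q * x"
  using S_qm1[of q] S_qm2[of q] q5 by (simp add: den_def cc_def cd_def qfacts)

lemma farey_I0: assumes "x \<in> {0<..<1 / (lam q + 1)}" shows "farey q x = x / (1 - lam q * x)"
proof -
  have "x \<in> J (q-1) True" using assms I0_eq by simp
  from farey_at[OF Kq1 this] have "farey q x = fm (q-1) True x" .
  also have "\<dots> = x / (1 - lam q * x)"
    unfolding fm_def den_q1 using S_q[of q] S_qm1[of q] q5 by (simp add: ca_def cb_def qfacts)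
  finally show ?thesis .
qed

lemma deriv_I0: assumes "x \<in> {0<..<1 / (lam q + 1)}" shows "deriv (farey q) x = 1 / (1 - lam q * x)^2"
proof -
  have "x \<in> J (q-1) True" using assms I0_eq by simp
  from deriv_farey[OF Kq1 this] show ?thesis unfolding den_q1 by (simp add: DD_def)
qed

lemma I0_pos: "x \<in> {0<..<1 / (lam q + 1)} \<Longrightarrow> 1 - lam q * x > 0"
proof -
  assume x: "x \<in> {0<..<1 / (lam q + 1)}"
  have L: "lam q > 1" by (rule lam_gt1)
  have "x * (lam q + 1) < 1" using x L by (simp add: field_simps)
  hence "lam q * x < 1" using x L by (simp add: algebra_simps)
  thus ?thesis by simp
qed

lemma AFN: "AFN_with {0..1} (farey q) (farey_partition q) {{0<..<1 / (lam q + 1)}} (\<lambda>I. 0)"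
proof -
  let ?P = "farey_partition q"
  let ?T = "farey q"
  let ?I0 = "{0<..<1 / (lam q + 1)}"
  let ?L = "lam q"
  have L: "?L > 1" by (rule lam_gt1)
  have bpos: "1 / (?L + 1) > 0" using L by simp
  have P: "?P = (\<lambda>(k,b). J k b) ` (Kset q \<times> UNIV)" by (rule partition_eq)
  have memP: "\<exists>k b. k \<in> Kset q \<and> x \<in> J k b" if "x \<in> \<Union>?P" for x
    using that unfolding P by auto
  have d: "\<forall>I\<in>?P. \<forall>x\<in>I. ?T differentiable (at x) \<and> deriv ?T differentiable (at x)"
  proof (intro ballI)
    fix I x assume I: "I \<in> ?P" and x: "x \<in> I"
    obtain k b where k: "k \<in> Kset q" and xJ: "x \<in> J k b" using I x unfolding P by auto
    show "?T differentiable (at x) \<and> deriv ?T differentiable (at x)"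
      using farey_deriv[OF k xJ] farey_deriv2[OF k xJ] unfolding real_differentiable_def by blast
  qed
  have A: "\<exists>C. \<forall>x\<in>\<Union>?P. \<bar>deriv (deriv ?T) x / (deriv ?T x)\<^sup>2\<bar> \<le> C"
  proof (intro exI ballI)
    fix x assume "x \<in> \<Union>?P"
    then obtain k b where k: "k \<in> Kset q" and x: "x \<in> J k b" using memP by blast
    have w: "den k b x > 0" "den k b x \<le> 1" using den_pos[OF k] den_le1[OF k] J_sub x by blast+
    have "\<bar>deriv (deriv ?T) x / (deriv ?T x)\<^sup>2\<bar> = 2 * \<bar>cc k b\<bar> * den k b x"
      unfolding deriv2_farey[OF k x] deriv_farey[OF k x]
      by (rule ratio_eq) (use w in \<open>auto simp: DD_def\<close>)
    also have "\<dots> \<le> 2 * (1 / sin (pi / real q)) * 1"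
      using cc_bound[OF k, of b] w sinpq_pos[of q] q2 by (intro mult_mono) auto
    finally show "\<bar>deriv (deriv ?T) x / (deriv ?T x)\<^sup>2\<bar> \<le> 2 * (1 / sin (pi / real q)) * 1" .
  qed
  have F: "finite ((\<lambda>I. ?T ` I) ` ?P)" unfolding P using finK by auto
  have P0: "{?I0} \<subseteq> ?P" unfolding P using Kq1 I0_eq by force
  have N: "\<forall>I\<in>{?I0}. (\<lambda>I. 0::real) I \<in> frontier I \<and>
        (?T \<longlongrightarrow> (\<lambda>I. 0) I) (at ((\<lambda>I. 0) I) within I) \<and>
        (deriv ?T \<longlongrightarrow> 1) (at ((\<lambda>I. 0) I) within I) \<and>
        antimono_on ({..<(\<lambda>I. 0) I} \<inter> I) (deriv ?T) \<and>
        mono_on ({(\<lambda>I. 0) I<..} \<inter> I) (deriv ?T)"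
  proof (simp only: ball_simps, intro conjI)
    show "0 \<in> frontier ?I0" using bpos by (simp add: frontier_def interior_open)
    have "((\<lambda>x. x / (1 - ?L * x)) \<longlongrightarrow> 0 / (1 - ?L * 0)) (at 0 within ?I0)"
      by (intro tendsto_intros) auto
    hence "((\<lambda>x. x / (1 - ?L * x)) \<longlongrightarrow> 0) (at 0 within ?I0)" by simp
    thus "(?T \<longlongrightarrow> 0) (at 0 within ?I0)"
      by (rule Lim_transform_within[OF _ zero_less_one]) (simp add: farey_I0)
    have "((\<lambda>x. 1 / (1 - ?L * x)^2) \<longlongrightarrow> 1 / (1 - ?L * 0)^2) (at 0 within ?I0)"
      by (intro tendsto_intros) auto
    hence "((\<lambda>x. 1 / (1 - ?L * x)^2) \<longlongrightarrow> 1) (at 0 within ?I0)" by simp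
    thus "(deriv ?T \<longlongrightarrow> 1) (at 0 within ?I0)"
      by (rule Lim_transform_within[OF _ zero_less_one]) (simp add: deriv_I0)
    have "{..<0} \<inter> ?I0 = {}" by auto
    thus "antimono_on ({..<0} \<inter> ?I0) (deriv ?T)" by (simp add: monotone_on_def)
    show "mono_on ({0<..} \<inter> ?I0) (deriv ?T)"
    proof (rule monotone_onI)
      fix r s assume r: "r \<in> {0<..} \<inter> ?I0" and s: "s \<in> {0<..} \<inter> ?I0" and rs: "r \<le> s"
      have "1 - ?L * s \<le> 1 - ?L * r" using rs L by (simp add: mult_left_mono)
      hence "1 / (1 - ?L * r)^2 \<le> 1 / (1 - ?L * s)^2"
        using I0_pos[of s] s by (intro inv_sq_mono) auto
      thus "deriv ?T r \<le> deriv ?T s" using r s by (simp add: deriv_I0)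
    qed
  qed simp
  have E: "\<forall>\<epsilon>>0. \<exists>\<rho>>1. \<forall>x \<in> \<Union>?P - (\<Union>I\<in>{?I0}. {(\<lambda>I. 0) I - \<epsilon> <..< (\<lambda>I. 0) I + \<epsilon>} \<inter> I).
        \<bar>deriv ?T x\<bar> \<ge> \<rho>"
  proof (intro allI impI)
    fix \<epsilon> :: real assume e: "\<epsilon> > 0"
    define R where "R = (\<lambda>j. S q j ^ 2) ` {2..q-2}"
    have Rfin: "finite R" "R \<noteq> {}" using q5 by (auto simp: R_def)
    have "\<forall>a\<in>R. 1 < a"
    proof
      fix a assume "a \<in> R"
      then obtain j where j: "2 \<le> j" "j \<le> q - 2" "a = S q j ^ 2" by (auto simp: R_def)
      have "j + 2 \<le> q" using j q5 by arith
      hence "S q j > 1" using S_gt1[of j q] j by blast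
      thus "1 < a" using j(3) by (simp add: one_less_power)
    qed
    hence R1: "Min R > 1" using Rfin by (simp add: Min_gr_iff)
    define e' where "e' = min \<epsilon> (1 / (?L + 1))"
    have e'0: "e' > 0" using e bpos by (simp add: e'_def)
    have "?L * e' \<le> ?L * (1 / (?L + 1))" using L by (intro mult_left_mono) (auto simp: e'_def)
    also have "\<dots> < 1" using L by (simp add: field_simps)
    finally have Le1: "?L * e' < 1" .
    have Le0: "?L * e' > 0" using L e'0 by simp
    define r2 where "r2 = 1 / (1 - ?L * e')^2"
    have "(1 - ?L * e')^2 < 1^2" using Le1 Le0 by (intro power_strict_mono) auto
    hence r2: "r2 > 1" unfolding r2_def using Le1 by (simp add: less_divide_eq)
    define \<rho> where "\<rho> = min (Min R) r2"
    show "\<exists>\<rho>>1. \<forall>x \<in> \<Union>?P - (\<Union>I\<in>{?I0}. {(\<lambda>I. 0) I - \<epsilon> <..< (\<lambda>I. 0) I + \<epsilon>} \<inter> I). \<bar>deriv ?T x\<bar> \<ge> \<rho>"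
    proof (intro exI conjI ballI)
      show "\<rho> > 1" using R1 r2 by (simp add: \<rho>_def)
      fix x assume x: "x \<in> \<Union>?P - (\<Union>I\<in>{?I0}. {(\<lambda>I. 0) I - \<epsilon> <..< (\<lambda>I. 0) I + \<epsilon>} \<inter> I)"
      have xU: "x \<in> \<Union>?P" using x by (rule DiffD1)
      obtain k b where k: "k \<in> Kset q" and xJ: "x \<in> J k b" using memP[OF xU] by blast
      have w: "den k b x > 0" using den_pos[OF k subsetD[OF J_sub xJ]] .
      have dabs: "\<bar>deriv ?T x\<bar> = 1 / (den k b x)^2"
        unfolding deriv_farey[OF k xJ] by (simp add: DD_def)
      show "\<bar>deriv ?T x\<bar> \<ge> \<rho>"
      proof (cases "k = q - 1 \<and> b")
        case True
        hence xI0: "x \<in> ?I0" using xJ I0_eq by simp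
        have "x \<notin> {0 - \<epsilon><..<0 + \<epsilon>} \<inter> ?I0" using x by blast
        hence "x \<ge> \<epsilon>" using xI0 by auto
        hence "x \<ge> e'" by (simp add: e'_def)
        hence "1 - ?L * x \<le> 1 - ?L * e'" using L by (simp add: mult_left_mono)
        hence "r2 \<le> 1 / (1 - ?L * x)^2" unfolding r2_def
          using I0_pos[OF xI0] by (intro inv_sq_mono) auto
        moreover have "\<bar>deriv ?T x\<bar> = 1 / (1 - ?L * x)^2" using deriv_I0[OF xI0] by simp
        ultimately show ?thesis by (simp add: \<rho>_def)
      next
        case False
        obtain j where j: "2 \<le> j" "j \<le> q - 2" "den k b x \<le> 1 / S q j"
        proof (cases b)
          case True
          hence "k \<noteq> q - 1" using False by simp
          hence "k \<le> q - 2" using K_mem[OF k] by arith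
          moreover have "den k b x \<le> 1 / S q k" using den_bounds(2)[OF k subsetD[OF J_sub xJ]] True by simp
          ultimately show ?thesis using K_mem[OF k] by (intro that[of k]) auto
        next
          case bF: False
          have "k - 1 \<le> q - 2" using K_mem[OF k] by arith
          moreover have "den k b x \<le> 1 / S q (k-1)" using den_bounds(2)[OF k subsetD[OF J_sub xJ]] bF by simp
          ultimately show ?thesis using K_mem[OF k] by (intro that[of "k-1"]) auto
        qed
        have "j + 2 \<le> q" using j q5 by arith
        hence Sj: "S q j > 0" using S_gt1[of j q] j by simp
        have "1 / (1 / S q j)^2 \<le> 1 / (den k b x)^2" using w j(3) by (rule inv_sq_mono)
        hence "S q j ^ 2 \<le> \<bar>deriv ?T x\<bar>" using dabs Sj by (simp add: power_divide)
        moreover have "Min R \<le> S q j ^ 2" using Rfin j by (auto simp: R_def intro!: Min_le)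
        ultimately show ?thesis by (simp add: \<rho>_def)
      qed
    qed
  qed
  have fin0: "finite {?I0}" by simp
  show ?thesis unfolding AFN_with_def by (intro conjI pms d A F fin0 P0 N E)
qed

end

theorem proposition2p3:
  fixes q :: nat
  assumes "odd q" and "q \<ge> 5"
  shows "AFN_map {0..1} (farey q) (farey_partition q) \<and>
         AFN_with {0..1} (farey q) (farey_partition q) {{0<..<1 / (lam q + 1)}} (\<lambda>I. 0) \<and>
         (\<lambda>I. (0::real)) ` {{0<..<1 / (lam q + 1)}} = {0}"
proof -
  interpret fq q using assms by unfold_locales
  show ?thesis using AFN unfolding AFN_map_def by auto
qed

end
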